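(* Let $\mathcal{B}=\{l\le l_0\}$ be a regular spherically symmetric ball of initial data (no asymptotic assumption) on which the dominant energy condition $\mu\ge|j|$ holds. If on the boundary sphere $\partial\mathcal{B}=\{l=l_0\}$ one has $\theta^->0$ and $\theta^+>0$, then the Misner–Sharp energy of the boundary is non-negative: $\mathcal{E}(l_0)\ge 0$.
   Context: Regular spherically symmetric data: metric $h=dl^2+r(l)^2(d\theta^2+\sin^2\theta\,d\phi^2)$ on the ball with $r$ smooth, $r(0)=0$, $r'(0)=1$; second fundamental form $K_{ij}=n_in_jK_l+(h_{ij}-n_in_j)K_r$ with $n=\partial_l$; constraints $K_r(K_r+2K_l)-\frac1{r^2}(r'^2+2rr''-1)=8\pi\mu$ and $K_r'+\frac{r'}{r}(K_r-K_l)=4\pi j$. Null expansions $\theta^\pm=\frac2r(r'\pm K_r r)$. Misner–Sharp energy $\mathcal{E}(l)=\frac{r}{2}\bigl(1-\frac{r^2}{4}\theta^+\theta^-\bigr)$. *)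

theory Defs
  imports "HOL-Analysis.Analysis"
begin

definition smooth_on :: "real set \<Rightarrow> (real \<Rightarrow> real) \<Rightarrow> bool" where
  "smooth_on S f \<longleftrightarrow> (\<exists>D :: nat \<Rightarrow> real \<Rightarrow> real.
      (\<forall>x\<in>S. D 0 x = f x) \<and>
      (\<forall>n. \<forall>x\<in>S. (D n has_real_derivative D (Suc n) x) (at x within S)))"

definition theta_plus :: "real \<Rightarrow> real \<Rightarrow> real \<Rightarrow> real" where
  "theta_plus r dr Kr = 2 / r * (dr + Kr * r)"

definition theta_minus :: "real \<Rightarrow> real \<Rightarrow> real \<Rightarrow> real" where
  "theta_minus r dr Kr = 2 / r * (dr - Kr * r)"

definition misner_sharp :: "real \<Rightarrow> real \<Rightarrow> real \<Rightarrow> real" where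
  "misner_sharp r dr Kr =
     r / 2 * (1 - r^2 / 4 * theta_plus r dr Kr * theta_minus r dr Kr)"

end

theory Submission
  imports Defs
begin

theorem mainTheorem2:
  fixes l0 :: real
    and r dr ddr Kl Kr dKr mu j :: "real \<Rightarrow> real"
  assumes l0_pos: "l0 > 0"
    and r_smooth: "smooth_on {0..l0} r"
    and Kl_smooth: "smooth_on {0..l0} Kl"
    and Kr_smooth: "smooth_on {0..l0} Kr"
    and r_deriv: "\<And>l. l \<in> {0..l0} \<Longrightarrow> (r has_real_derivative dr l) (at l within {0..l0})"
    and dr_deriv: "\<And>l. l \<in> {0..l0} \<Longrightarrow> (dr has_real_derivative ddr l) (at l within {0..l0})"
    and Kr_deriv: "\<And>l. l \<in> {0..l0} \<Longrightarrow> (Kr has_real_derivative dKr l) (at l within {0..l0})"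
    and r_center: "r 0 = 0"
    and dr_center: "dr 0 = 1"
    and r_pos: "\<And>l. l \<in> {0<..l0} \<Longrightarrow> r l > 0"
    and hamiltonian: "\<And>l. l \<in> {0<..l0} \<Longrightarrow>
          Kr l * (Kr l + 2 * Kl l) - (dr l ^ 2 + 2 * r l * ddr l - 1) / r l ^ 2 = 8 * pi * mu l"
    and momentum: "\<And>l. l \<in> {0<..l0} \<Longrightarrow>
          dKr l + dr l / r l * (Kr l - Kl l) = 4 * pi * j l"
    and dec: "\<And>l. l \<in> {0<..l0} \<Longrightarrow> mu l \<ge> \<bar>j l\<bar>"
    and theta_minus_pos: "theta_minus (r l0) (dr l0) (Kr l0) > 0"
    and theta_plus_pos: "theta_plus (r l0) (dr l0) (Kr l0) > 0"
  shows "misner_sharp (r l0) (dr l0) (Kr l0) \<ge> 0"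
proof -
  let ?I = "{0..l0}"
  define E where "E l = r l / 2 * (1 - dr l ^ 2 + Kr l ^ 2 * r l ^ 2)" for l
  define g where "g l = dr l - \<bar>Kr l * r l\<bar>" for l
  have cr: "continuous_on ?I r"
    by (rule DERIV_continuous_on[OF r_deriv])
  have cdr: "continuous_on ?I dr"
    by (rule DERIV_continuous_on[OF dr_deriv])
  have cKr: "continuous_on ?I Kr"
    by (rule DERIV_continuous_on[OF Kr_deriv])
  have cg: "continuous_on ?I g" unfolding g_def
    by (intro continuous_intros cr cdr cKr)
  have cE: "continuous_on ?I E" unfolding E_def
    by (intro continuous_intros cr cdr cKr) auto
  have rl0: "r l0 > 0" using r_pos l0_pos by auto
  have gl0: "g l0 > 0"
  proof -
    have a: "dr l0 - Kr l0 * r l0 > 0" using theta_minus_pos rl0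
      by (simp add: theta_minus_def zero_less_divide_iff)
    have b: "dr l0 + Kr l0 * r l0 > 0" using theta_plus_pos rl0
      by (simp add: theta_plus_def zero_less_divide_iff)
    show ?thesis using a b unfolding g_def by (auto simp: abs_if)
  qed
  define S where "S = {l \<in> ?I. g l \<le> 0} \<union> {0}"
  define l1 where "l1 = Sup S"
  have Sne: "S \<noteq> {}" unfolding S_def by auto
  have Sbdd: "bdd_above S" unfolding S_def using l0_pos by (auto intro!: bdd_aboveI[of _ l0])
  have Scl: "closed S"
  proof -
    have "closed {l \<in> ?I. g l \<le> 0}"
      using continuous_closed_preimage[OF cg closed_atLeastAtMost closed_atMost[of 0]]
      by (simp add: vimage_def Int_def)
    thus ?thesis unfolding S_def by auto
  qed
  have l1S: "l1 \<in> S" unfolding l1_def using closed_contains_Sup[OF Sne Sbdd Scl] .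
  have l1ge: "l1 \<ge> 0" unfolding l1_def using Sbdd by (auto intro: cSup_upper simp: S_def)
  have l1le: "l1 \<le> l0" unfolding l1_def using l0_pos by (auto intro!: cSup_least simp: S_def)
  have gpos: "g x > 0" if "l1 < x" "x \<le> l0" for x
  proof (rule ccontr)
    assume "\<not> g x > 0"
    hence "x \<in> S" using that l1ge unfolding S_def by auto
    hence "x \<le> l1" unfolding l1_def using Sbdd by (rule cSup_upper)
    thus False using that by auto
  qed
  have l1lt: "l1 < l0"
  proof (rule ccontr)
    assume "\<not> l1 < l0" hence "l1 = l0" using l1le by auto
    thus False using l1S gl0 l0_pos unfolding S_def by auto
  qed
  have El1: "E l1 \<ge> 0"
  proof (cases "l1 = 0")
    case True thus ?thesis by (simp add: E_def r_center)
  next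
    case False
    hence gle: "g l1 \<le> 0" using l1S unfolding S_def by auto
    have gge: "g l1 \<ge> 0"
    proof (rule ccontr)
      assume "\<not> g l1 \<ge> 0"
      hence neg: "g l1 < 0" by simp
      have "l1 \<in> ?I" using l1ge l1le by auto
      then obtain d where d: "d > 0" "\<And>x. x \<in> ?I \<Longrightarrow> dist x l1 < d \<Longrightarrow> dist (g x) (g l1) < - g l1"
        using cg neg unfolding continuous_on_iff by (metis neg_0_less_iff_less)
      define x where "x = min l0 (l1 + d/2)"
      have "x \<in> ?I" "dist x l1 < d" using l1lt l1ge d unfolding x_def by (auto simp: dist_real_def)
      hence "dist (g x) (g l1) < - g l1" by (rule d(2))
      moreover have "g x > 0" using gpos[of x] l1lt d unfolding x_def by auto
      ultimately show False by (auto simp: dist_real_def)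
    qed
    hence "dr l1 = \<bar>Kr l1 * r l1\<bar>" using gle unfolding g_def by auto
    hence "1 - dr l1 ^ 2 + Kr l1 ^ 2 * r l1 ^ 2 = 1" by (simp add: power2_eq_square abs_mult_self_eq)
    moreover have "r l1 > 0" using r_pos False l1ge l1le by auto
    ultimately show ?thesis by (simp add: E_def)
  qed
  have deriv: "(E has_real_derivative 4 * pi * r x ^ 2 * (mu x * dr x + j x * Kr x * r x)) (at x)"
    and dnn: "4 * pi * r x ^ 2 * (mu x * dr x + j x * Kr x * r x) \<ge> 0"
    if x: "l1 < x" "x < l0" for x
  proof -
    have xI: "x \<in> {0<..l0}" using x l1ge by auto
    have atx: "at x within {0<..<l0} = at x" using xI x by (intro at_within_open) auto
    have sub: "{0<..<l0} \<subseteq> ?I" by auto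
    have d1: "(r has_real_derivative dr x) (at x)" using r_deriv[of x] xI
      by (metis atx has_field_derivative_subset sub greaterThanAtMost_iff atLeastAtMost_iff less_imp_le)
    have d2: "(dr has_real_derivative ddr x) (at x)" using dr_deriv[of x] xI
      by (metis atx has_field_derivative_subset sub greaterThanAtMost_iff atLeastAtMost_iff less_imp_le)
    have d3: "(Kr has_real_derivative dKr x) (at x)" using Kr_deriv[of x] xI
      by (metis atx has_field_derivative_subset sub greaterThanAtMost_iff atLeastAtMost_iff less_imp_le)
    have dE: "(E has_real_derivative
        dr x / 2 * (1 - dr x ^ 2 + Kr x ^ 2 * r x ^ 2) + r x / 2 * (- (2 * dr x * ddr x) + (2 * Kr x * dKr x * r x ^ 2 + Kr x ^ 2 * (2 * r x * dr x)))) (at x)"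
      unfolding E_def[abs_def]
      by (rule derivative_eq_intros d1 d2 d3 refl | simp)+
    have rp: "r x > 0" using r_pos xI by auto
    have h: "Kr x * (Kr x + 2 * Kl x) - (dr x ^ 2 + 2 * r x * ddr x - 1) / r x ^ 2 = 8 * pi * mu x"
      using hamiltonian xI by auto
    have m: "dKr x + dr x / r x * (Kr x - Kl x) = 4 * pi * j x" using momentum xI by auto
    have h': "Kr x * (Kr x + 2 * Kl x) * r x ^ 2 - (dr x ^ 2 + 2 * r x * ddr x - 1) = 8 * pi * mu x * r x ^ 2"
      using h rp by (simp add: field_simps)
    have m': "dKr x * r x + dr x * (Kr x - Kl x) = 4 * pi * j x * r x"
      using m rp by (simp add: field_simps)
    have eq: "dr x / 2 * (1 - dr x ^ 2 + Kr x ^ 2 * r x ^ 2) + r x / 2 * (- (2 * dr x * ddr x) + (2 * Kr x * dKr x * r x ^ 2 + Kr x ^ 2 * (2 * r x * dr x)))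
        = 4 * pi * r x ^ 2 * (mu x * dr x + j x * Kr x * r x)"
    proof -
      have "4 * pi * r x ^ 2 * (mu x * dr x + j x * Kr x * r x)
          = dr x / 2 * (8 * pi * mu x * r x ^ 2) + Kr x * r x ^ 2 * (4 * pi * j x * r x)"
        by (simp add: algebra_simps power2_eq_square)
      also have "\<dots> = dr x / 2 * (Kr x * (Kr x + 2 * Kl x) * r x ^ 2 - (dr x ^ 2 + 2 * r x * ddr x - 1))
           + Kr x * r x ^ 2 * (dKr x * r x + dr x * (Kr x - Kl x))"
        using h' m' by simp
      finally show ?thesis by (simp add: algebra_simps power2_eq_square)
    qed
    show "(E has_real_derivative 4 * pi * r x ^ 2 * (mu x * dr x + j x * Kr x * r x)) (at x)"
      using dE eq by simp
    have gx: "dr x > \<bar>Kr x * r x\<bar>" using gpos[of x] x unfolding g_def by auto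
    have mu: "mu x \<ge> \<bar>j x\<bar>" using dec xI by auto
    have "mu x * dr x \<ge> \<bar>j x\<bar> * dr x" using mu gx by (intro mult_right_mono) auto
    moreover have "\<bar>j x\<bar> * dr x \<ge> \<bar>j x\<bar> * \<bar>Kr x * r x\<bar>" using gx by (intro mult_left_mono) auto
    moreover have "\<bar>j x\<bar> * \<bar>Kr x * r x\<bar> \<ge> - (j x * Kr x * r x)"
      by (metis abs_ge_minus_self abs_mult mult.assoc)
    ultimately have "mu x * dr x + j x * Kr x * r x \<ge> 0" by linarith
    thus "4 * pi * r x ^ 2 * (mu x * dr x + j x * Kr x * r x) \<ge> 0" by simp
  qed
  have "E l1 \<le> E l0"
  proof -
    have cE1: "continuous_on {l1..l0} E" using continuous_on_subset[OF cE] l1ge by auto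
    obtain L z where z: "l1 < z" "z < l0" "DERIV E z :> L"
      "E l0 - E l1 = (l0 - l1) * L"
      using MVT[OF l1lt cE1] deriv real_differentiable_def by blast
    have "L = 4 * pi * r z ^ 2 * (mu z * dr z + j z * Kr z * r z)"
      using DERIV_unique[OF z(3) deriv[OF z(1,2)]] .
    hence "L \<ge> 0" using dnn[OF z(1,2)] by simp
    hence "(l0 - l1) * L \<ge> 0" using l1lt by simp
    thus ?thesis using z(4) by simp
  qed
  moreover have "misner_sharp (r l0) (dr l0) (Kr l0) = E l0"
    using rl0 unfolding misner_sharp_def theta_plus_def theta_minus_def E_def
    by (simp add: field_simps power2_eq_square)
  ultimately show ?thesis using El1 by simp
qed

end
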